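(* Let $\gamma\in\mathcal{M}_k\otimes\mathcal{M}_k$ be a nonzero state whose image is contained in the anti-symmetric subspace of $\mathbb{C}^k\otimes\mathbb{C}^k$. Then $\gamma^\Gamma\not\ge0$, $\mathcal{R}(\gamma^\Gamma)\not\ge0$, and $\mathcal{R}(\gamma)\neq\gamma$.
   Context: $\mathcal{M}_k$ denotes complex $k\times k$ matrices; $\mathcal{M}_k\otimes\mathcal{M}_k\cong\mathcal{M}_{k^2}$ via the Kronecker product. A state is a positive semidefinite Hermitian matrix (not necessarily of trace one). The anti-symmetric subspace of $\mathbb{C}^k\otimes\mathbb{C}^k$ is $\{x:F_kx=-x\}$, where $F_k(v\otimes w)=w\otimes v$. Partial transpose: $(\sum_iA_i\otimes B_i)^\Gamma=\sum_iA_i\otimes B_i^t$. Realignment on $\mathcal{M}_k\otimes\mathcal{M}_k$: identify $\mathcal{M}_k$ with $\mathbb{C}^k\otimes\mathbb{C}^k$ via $\mathrm{vec}(vw^t)=v\otimes w$ (extended linearly), and set $\mathcal{R}(A\otimes B)=\mathrm{vec}(A)\mathrm{vec}(B)^t$, extended linearly. *)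

theory Defs
  imports "HOL-Analysis.Analysis"
begin

text \<open>Matrices in M_k (x) M_k = M_{k^2} are represented as complex matrices indexed by
  pairs (i,j) of the finite type 'k, with the Kronecker convention
  (A (x) B) $ (i,j) $ (k,l) = A $ i $ k * B $ j $ l; vectors of C^k (x) C^k likewise
  satisfy (v (x) w) $ (i,j) = v $ i * w $ j.\<close>

type_synonym 'k bimat = "complex ^ ('k \<times> 'k) ^ ('k \<times> 'k)"
type_synonym 'k bivec = "complex ^ ('k \<times> 'k)"

definition hermitian_mat :: "complex ^ 'n ^ 'n \<Rightarrow> bool" where
  "hermitian_mat A \<longleftrightarrow> (\<forall>i j. A $ i $ j = cnj (A $ j $ i))"

text \<open>Positive semidefinite (a "state" in the paper's sense, trace not normalised):
  Hermitian and x^* A x is a nonnegative real for every x.\<close>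
definition psd :: "complex ^ ('n::finite) ^ 'n \<Rightarrow> bool" where
  "psd A \<longleftrightarrow> hermitian_mat A \<and>
     (\<forall>x :: complex ^ 'n. let q = (\<Sum>i\<in>UNIV. cnj (x $ i) * (A *v x) $ i)
                           in Im q = 0 \<and> Re q \<ge> 0)"

definition flip :: "('k::finite) bivec \<Rightarrow> 'k bivec" where
  "flip v = (\<chi> p. v $ (snd p, fst p))"

definition antisym_subspace :: "('k::finite) bivec set" where
  "antisym_subspace = {x. flip x = - x}"

text \<open>Partial transpose: (A (x) B)^Gamma = A (x) B^t, i.e. entry ((i,j),(k,l)) of
  gamma^Gamma is entry ((i,l),(k,j)) of gamma.\<close>
definition partial_transpose :: "('k::finite) bimat \<Rightarrow> 'k bimat" where
  "partial_transpose g = (\<chi> p q. g $ (fst p, snd q) $ (fst q, snd p))"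

text \<open>Realignment: R(A (x) B) = vec(A) vec(B)^t with vec(A) $ (i,j) = A $ i $ j, i.e.
  entry ((i,j),(k,l)) of R(gamma) is entry ((i,k),(j,l)) of gamma.\<close>
definition realign :: "('k::finite) bimat \<Rightarrow> 'k bimat" where
  "realign g = (\<chi> p q. g $ (fst p, fst q) $ (snd p, snd q))"

end

theory Submission
  imports Defs
begin

lemma sum1: assumes "\<And>i. i \<noteq> p \<Longrightarrow> f i = 0"
  shows "(\<Sum>i\<in>(UNIV::'n::finite set). f i) = f p"
proof -
  have "(\<Sum>i\<in>UNIV. f i) = (\<Sum>i\<in>{p}. f i)" by (rule sum.mono_neutral_right) (use assms in auto)
  thus ?thesis using assms by simp
qed

lemma sum2: assumes "p \<noteq> q" "\<And>i. i \<noteq> p \<Longrightarrow> i \<noteq> q \<Longrightarrow> f i = 0"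
  shows "(\<Sum>i\<in>(UNIV::'n::finite set). f i) = f p + f q"
proof -
  have "(\<Sum>i\<in>UNIV. f i) = (\<Sum>i\<in>{p,q}. f i)" by (rule sum.mono_neutral_right) (use assms in auto)
  thus ?thesis using assms by simp
qed

lemma sumdiag: assumes "\<And>p. fst p \<noteq> snd p \<Longrightarrow> f p = 0"
  shows "(\<Sum>p\<in>(UNIV::('k::finite \<times> 'k) set). f p) = (\<Sum>i\<in>UNIV. f (i,i))"
proof -
  have z: "f p = 0" if "p \<notin> range (\<lambda>i::'k. (i,i))" for p
  proof (rule assms)
    show "fst p \<noteq> snd p"
    proof
      assume "fst p = snd p"
      hence "p = (\<lambda>i. (i,i)) (fst p)" by (cases p) simp
      thus False using that by blast
    qed
  qed
  have "(\<Sum>p\<in>UNIV. f p) = (\<Sum>p\<in>range (\<lambda>i::'k. (i,i)). f p)"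
    by (rule sum.mono_neutral_right) (auto intro: z)
  also have "\<dots> = (\<Sum>i\<in>UNIV. f (i,i))"
    by (subst sum.reindex) (auto simp: inj_on_def)
  finally show ?thesis .
qed

lemma sumpair: "(\<Sum>p\<in>(UNIV::('k::finite \<times> 'k) set). f p) = (\<Sum>i\<in>UNIV. \<Sum>j\<in>UNIV. f (i,j))"
proof -
  have "(\<Sum>p\<in>(UNIV::('k \<times> 'k) set). f p) = (\<Sum>p\<in>(UNIV::'k set) \<times> (UNIV::'k set). f p)"
    by (simp only: UNIV_Times_UNIV)
  also have "\<dots> = (\<Sum>i\<in>UNIV. \<Sum>j\<in>UNIV. f (i,j))" unfolding sum.cartesian_product by simp
  finally show ?thesis .
qed

lemma qf_expand:
  "(\<Sum>i\<in>UNIV. cnj (x $ i) * (A *v x) $ i) = (\<Sum>i\<in>UNIV. \<Sum>j\<in>UNIV. cnj (x$i) * A$i$j * x$j)"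
  by (simp add: matrix_vector_mult_def sum_distrib_left mult.assoc)

lemma psd_qf:
  assumes "psd A"
  shows "Re (\<Sum>i\<in>UNIV. \<Sum>j\<in>UNIV. cnj (x$i) * A$i$j * x$j) \<ge> 0"
    "Im (\<Sum>i\<in>UNIV. \<Sum>j\<in>UNIV. cnj (x$i) * A$i$j * x$j) = 0"
  using assms unfolding psd_def Let_def qf_expand[symmetric] by auto

lemma psd_diag:
  assumes "psd (A :: complex ^ ('n::finite) ^ 'n)"
  shows "Re (A$p$p) \<ge> 0" "Im (A$p$p) = 0"
proof -
  let ?x = "(\<chi> r. if r = p then 1 else 0) :: complex ^ 'n"
  have e: "(\<Sum>i\<in>UNIV. \<Sum>j\<in>UNIV. cnj (?x$i) * A$i$j * ?x$j) = A$p$p"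
    by (subst sum1[of p], simp, subst sum1[of p], simp, simp)
  show "Re (A$p$p) \<ge> 0" using psd_qf(1)[OF assms, of ?x] by (simp only: e)
  show "Im (A$p$p) = 0" using psd_qf(2)[OF assms, of ?x] by (simp only: e)
qed

lemma psd_herm: "psd A \<Longrightarrow> A$i$j = cnj (A$j$i)"
  unfolding psd_def hermitian_mat_def by blast

lemma psd_offdiag:
  assumes "psd (A :: complex ^ ('n::finite) ^ 'n)" "A$p$p = 0" "A$q$q = 0" "p \<noteq> q"
  shows "A$p$q = 0"
proof -
  define c where "c = - A$p$q"
  let ?x = "(\<chi> r. if r = p then c else if r = q then 1 else 0) :: complex ^ 'n"
  have h: "A$q$p = cnj (A$p$q)" using assms(1) by (rule psd_herm)
  have e: "(\<Sum>i\<in>UNIV. \<Sum>j\<in>UNIV. cnj (?x$i) * A$i$j * ?x$j) = cnj c * A$p$q + A$q$p * c"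
    using assms by (subst sum2[OF assms(4)], simp, subst sum2[OF assms(4)], simp, subst sum2[OF assms(4)], simp, simp)
  have r: "Re (cnj c * A$p$q + A$q$p * c) = - 2 * ((Re (A$p$q))\<^sup>2 + (Im (A$p$q))\<^sup>2)"
    unfolding c_def h by (simp add: power2_eq_square)
  have "Re (cnj c * A$p$q + A$q$p * c) \<ge> 0" using psd_qf(1)[OF assms(1), of ?x] unfolding e .
  hence "(Re (A$p$q))\<^sup>2 + (Im (A$p$q))\<^sup>2 \<le> 0" unfolding r by simp
  hence "Re (A$p$q) = 0 \<and> Im (A$p$q) = 0"
    by (metis add_nonneg_eq_0_iff order_antisym zero_le_power2 power_eq_0_iff sum_power2_le_zero_iff)
  then show ?thesis by (simp add: complex_eq_iff)
qed
lemma psd_trace_pos: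
  assumes "psd (A :: complex ^ ('n::finite) ^ 'n)" "A \<noteq> 0"
  shows "Re (\<Sum>p\<in>UNIV. A$p$p) > 0"
proof (rule ccontr)
  assume neg: "\<not> ?thesis"
  have nn: "\<And>p. 0 \<le> Re (A$p$p)" using psd_diag(1)[OF assms(1)] .
  have rs: "Re (\<Sum>p\<in>UNIV. A$p$p) = (\<Sum>p\<in>UNIV. Re (A$p$p))" by (rule Re_sum)
  have ge: "(\<Sum>p\<in>UNIV. Re (A$p$p)) \<ge> 0" by (rule sum_nonneg) (rule nn)
  have s0: "(\<Sum>p\<in>UNIV. Re (A$p$p)) = 0" using ge neg unfolding rs by linarith
  have z: "\<forall>p\<in>UNIV. Re (A$p$p) = 0"
    using sum_nonneg_eq_0_iff[of UNIV "\<lambda>p. Re (A$p$p)", OF finite nn] s0 by blast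
  have d: "\<And>p. A$p$p = 0"
  proof -
    fix p
    show "A$p$p = 0" using z psd_diag(2)[OF assms(1), of p] by (simp add: complex_eq_iff)
  qed
  have off: "A$p$q = 0" for p q
  proof (cases "p = q")
    case True thus ?thesis using d by simp
  next
    case False thus ?thesis by (rule psd_offdiag[OF assms(1) d d])
  qed
  have "A = 0" by (simp add: vec_eq_iff off)
  thus False using assms(2) by simp
qed

theorem mainTheorem17:
  fixes \<gamma> :: "('k::finite) bimat"
  assumes "psd \<gamma>"
    and "\<gamma> \<noteq> 0"
    and "\<forall>x. \<gamma> *v x \<in> antisym_subspace"
  shows "\<not> psd (partial_transpose \<gamma>) \<and> \<not> psd (realign (partial_transpose \<gamma>)) \<and> realign \<gamma> \<noteq> \<gamma>"
proof -
  have herm: "\<And>p q. \<gamma>$p$q = cnj (\<gamma>$q$p)" using assms(1) by (rule psd_herm)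
  have mv: "(\<gamma> *v (\<chi> r. if r = q then 1 else 0))$p = \<gamma>$p$q" for p q
    unfolding matrix_vector_mult_def by (subst sum1[of q]) auto
  have row: "\<gamma>$(j,i)$q = - \<gamma>$(i,j)$q" for i j q
  proof -
    have "\<gamma> *v (\<chi> r. if r = q then 1 else 0) \<in> antisym_subspace" using assms(3) by (rule spec)
    hence "flip (\<gamma> *v (\<chi> r. if r = q then 1 else 0)) = - (\<gamma> *v (\<chi> r. if r = q then 1 else 0))"
      unfolding antisym_subspace_def by (rule CollectD)
    hence "(flip (\<gamma> *v (\<chi> r. if r = q then 1 else 0)))$(i,j) = - (\<gamma> *v (\<chi> r. if r = q then 1 else 0))$(i,j)"
      by simp
    thus ?thesis unfolding flip_def using mv by simp
  qed
  have col: "\<gamma>$p$(l,k) = - \<gamma>$p$(k,l)" for p k l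
  proof -
    have "\<gamma>$p$(l,k) = cnj (\<gamma>$(l,k)$p)" by (rule herm)
    also have "\<dots> = cnj (- \<gamma>$(k,l)$p)" by (rule arg_cong[where f=cnj], rule row)
    also have "\<dots> = - cnj (cnj (\<gamma>$p$(k,l)))" by (simp only: herm[of "(k,l)" p] complex_cnj_minus)
    finally show ?thesis by simp
  qed
  have rowdiag: "\<gamma>$(i,i)$q = 0" for i q using row[of i i q] by simp
  define T where "T = (\<Sum>p\<in>UNIV. \<gamma>$p$p)"
  have Tpos: "Re T > 0" unfolding T_def by (rule psd_trace_pos[OF assms(1,2)])
  have c3: "realign \<gamma> \<noteq> \<gamma>"
  proof
    assume eq: "realign \<gamma> = \<gamma>"
    have "\<gamma>$p$p = 0" for p
    proof -
      have "\<gamma>$p$p = realign \<gamma> $p$p" using eq by simp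
      also have "\<dots> = 0" unfolding realign_def using rowdiag by simp
      finally show ?thesis .
    qed
    hence "T = 0" unfolding T_def by simp
    thus False using Tpos by simp
  qed
  have c2: "\<not> psd (realign (partial_transpose \<gamma>))"
  proof
    assume ps: "psd (realign (partial_transpose \<gamma>))"
    have "Re (- \<gamma>$p$p) \<ge> 0" for p
    proof -
      have "realign (partial_transpose \<gamma>) $p$p = \<gamma>$(fst p, snd p)$(snd p, fst p)"
        unfolding realign_def partial_transpose_def by simp
      also have "\<dots> = - \<gamma>$p$p" by (cases p) (simp only: fst_conv snd_conv, rule col)
      finally show ?thesis using psd_diag(1)[OF ps, of p] by simp
    qed
    hence "(\<Sum>p\<in>UNIV. Re (- \<gamma>$p$p)) \<ge> 0" by (simp add: sum_nonneg)
    hence "Re T \<le> 0" unfolding T_def by (simp add: Re_sum sum_negf)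
    thus False using Tpos by simp
  qed
  have c1: "\<not> psd (partial_transpose \<gamma>)"
  proof
    assume ps: "psd (partial_transpose \<gamma>)"
    let ?x = "(\<chi> p. if fst p = snd p then 1 else 0) :: 'k bivec"
    have "(\<Sum>p\<in>UNIV. \<Sum>q\<in>UNIV. cnj (?x$p) * (partial_transpose \<gamma>)$p$q * ?x$q)
        = (\<Sum>i\<in>UNIV. \<Sum>k\<in>UNIV. \<gamma>$(i,k)$(k,i))"
      by (subst sumdiag, simp, subst sumdiag, simp, simp add: partial_transpose_def)
    also have "\<dots> = (\<Sum>i\<in>UNIV. \<Sum>k\<in>UNIV. - \<gamma>$(i,k)$(i,k))" by (intro sum.cong refl) (rule col)
    also have "\<dots> = - T" unfolding T_def sumpair[of "\<lambda>p. \<gamma>$p$p"] by (simp add: sum_negf)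
    finally show False using psd_qf(1)[OF ps, of ?x] Tpos by simp
  qed
  show ?thesis using c1 c2 c3 by simp
qed

end
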